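(* Let $p_1,\dots,p_n$ be probability densities on $\mathbb{R}^d$ of the form $p_i=e^{-f_i}$ with $f_i$ smooth, let $w_1,\dots,w_n>0$ with $\sum_iw_i=1$, and let $p=\sum_{i=1}^nw_ip_i$. Suppose each $p_i$ satisfies a Poincaré inequality with constant $C$. Then $\lambda_{n+1}(p)\ge 1/C$.
   Context: For a probability density $p$ on $\mathbb{R}^d$, $\mathcal E_p(g)=\int\|\nabla g\|^2p\,dx$ is the Dirichlet form of Langevin diffusion with stationary distribution $p$, $\langle g,h\rangle_p=\int ghp\,dx$, $\|g\|_p^2=\langle g,g\rangle_p$, $\operatorname{Var}_p(g)=\|g-\int gp\|_p^2$; functions $g$ range over locally Lipschitz functions with $\int(g^2+\|\nabla g\|^2)p<\infty$. $p$ satisfies a Poincaré inequality with constant $C$ if $\mathcal E_p(g)\ge\frac1C\operatorname{Var}_p(g)$ for all such $g$. The $k$-th eigenvalue of (minus) the Langevin generator is defined variationally: $\lambda_k(p)=\sup_{S\subseteq L^2(p),\ \dim S=k-1}\ \inf\{\mathcal E_p(g)/\|g\|_p^2:\ g\neq0,\ \langle g,s\rangle_p=0\ \forall s\in S\}$. *)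

theory Defs
  imports "HOL-Analysis.Analysis"
begin

text \<open>Setting: R^d is modelled by an arbitrary euclidean_space 'a, with Lebesgue measure.\<close>

fun pderivs :: "'a::euclidean_space list \<Rightarrow> ('a \<Rightarrow> real) \<Rightarrow> ('a \<Rightarrow> real)" where
  "pderivs [] f = f"
| "pderivs (b # bs) f = (\<lambda>x. frechet_derivative (pderivs bs f) (at x) b)"

definition smooth_fun :: "('a::euclidean_space \<Rightarrow> real) \<Rightarrow> bool" where
  "smooth_fun f \<longleftrightarrow> (\<forall>bs. set bs \<subseteq> Basis \<longrightarrow> (\<forall>x. pderivs bs f differentiable (at x)))"

definition prob_density :: "('a::euclidean_space \<Rightarrow> real) \<Rightarrow> bool" where
  "prob_density p \<longleftrightarrow> (\<forall>x. 0 \<le> p x) \<and> p \<in> borel_measurable lebesgue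
     \<and> integrable lebesgue p \<and> (\<integral>x. p x \<partial>lebesgue) = 1"

definition locally_lipschitz :: "('a::euclidean_space \<Rightarrow> real) \<Rightarrow> bool" where
  "locally_lipschitz g \<longleftrightarrow> (\<forall>x. \<exists>e>0. \<exists>L. L-lipschitz_on (ball x e) g)"

text \<open>Gradient (exists a.e. for locally Lipschitz functions, by Rademacher).\<close>
definition grad :: "('a::euclidean_space \<Rightarrow> real) \<Rightarrow> 'a \<Rightarrow> 'a" where
  "grad g x = (if g differentiable (at x)
      then (\<Sum>b\<in>Basis. frechet_derivative g (at x) b *\<^sub>R b) else 0)"

definition dirichlet :: "('a::euclidean_space \<Rightarrow> real) \<Rightarrow> ('a \<Rightarrow> real) \<Rightarrow> real" where
  "dirichlet p g = (\<integral>x. (norm (grad g x))\<^sup>2 * p x \<partial>lebesgue)"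

definition inner_p :: "('a::euclidean_space \<Rightarrow> real) \<Rightarrow> ('a \<Rightarrow> real) \<Rightarrow> ('a \<Rightarrow> real) \<Rightarrow> real" where
  "inner_p p g h = (\<integral>x. g x * h x * p x \<partial>lebesgue)"

definition normsq_p :: "('a::euclidean_space \<Rightarrow> real) \<Rightarrow> ('a \<Rightarrow> real) \<Rightarrow> real" where
  "normsq_p p g = inner_p p g g"

definition var_p :: "('a::euclidean_space \<Rightarrow> real) \<Rightarrow> ('a \<Rightarrow> real) \<Rightarrow> real" where
  "var_p p g = normsq_p p (\<lambda>x. g x - (\<integral>y. g y * p y \<partial>lebesgue))"

definition L2_p :: "('a::euclidean_space \<Rightarrow> real) \<Rightarrow> ('a \<Rightarrow> real) set" where
  "L2_p p = {s. s \<in> borel_measurable lebesgue \<and> integrable lebesgue (\<lambda>x. (s x)\<^sup>2 * p x)}"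

definition admissible :: "('a::euclidean_space \<Rightarrow> real) \<Rightarrow> ('a \<Rightarrow> real) \<Rightarrow> bool" where
  "admissible p g \<longleftrightarrow> locally_lipschitz g
     \<and> integrable lebesgue (\<lambda>x. ((g x)\<^sup>2 + (norm (grad g x))\<^sup>2) * p x)"

definition poincare :: "('a::euclidean_space \<Rightarrow> real) \<Rightarrow> real \<Rightarrow> bool" where
  "poincare p C \<longleftrightarrow> (\<forall>g. admissible p g \<longrightarrow> dirichlet p g \<ge> (1 / C) * var_p p g)"

text \<open>A (k-1)-dimensional subspace S of L^2(p) is given by a basis s_0..s_{k-2},
  linearly independent as elements of L^2(p); orthogonality to S = orthogonality to the basis.\<close>
definition l2_indep :: "('a::euclidean_space \<Rightarrow> real) \<Rightarrow> nat \<Rightarrow> (nat \<Rightarrow> 'a \<Rightarrow> real) \<Rightarrow> bool" where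
  "l2_indep p m s \<longleftrightarrow> (\<forall>j<m. s j \<in> L2_p p) \<and>
     (\<forall>c::nat \<Rightarrow> real. normsq_p p (\<lambda>x. \<Sum>j<m. c j * s j x) = 0 \<longrightarrow> (\<forall>j<m. c j = 0))"

definition eigval :: "nat \<Rightarrow> ('a::euclidean_space \<Rightarrow> real) \<Rightarrow> ereal" where
  "eigval k p = (SUP s \<in> {s. l2_indep p (k - 1) s}.
      INF g \<in> {g. admissible p g \<and> normsq_p p g \<noteq> 0 \<and> (\<forall>j<k-1. inner_p p g (s j) = 0)}.
        ereal (dirichlet p g / normsq_p p g))"

end

theory Submission
  imports Defs
begin



lemma cont_meas:
  fixes h :: "'a::euclidean_space \<Rightarrow> real"
  assumes "continuous_on UNIV h" shows "h \<in> borel_measurable lebesgue"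

  by (simp add: assms borel_measurable_continuous_onI measurable_completion)

lemma ball_not_null:
  fixes x :: "'a::euclidean_space"
  assumes "e > 0" shows "ball x e \<notin> null_sets lebesgue"
proof
  assume "ball x e \<in> null_sets lebesgue"
  then have "emeasure lebesgue (ball x e) = 0" by auto
  moreover have "emeasure lebesgue (ball x e) = emeasure lborel (ball x e)"
    by (simp add: emeasure_lborel_ball_finite emeasure_completion)
  moreover have "emeasure lborel (ball x e) > 0"
    using assms by (simp add: emeasure_ball)
  ultimately show False by simp
qed

lemma AE_cont_zero:
  fixes h :: "'a::euclidean_space \<Rightarrow> real"
  assumes c: "continuous_on UNIV h" and ae: "AE x in lebesgue. h x = 0"
  shows "h x = 0"
proof (rule ccontr)
  assume hx: "h x \<noteq> 0"
  have "open {y. h y \<noteq> 0}"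
    using c by (simp add: continuous_on_open_vimage[of UNIV h] open_Collect_neq continuous_on_const)
  then obtain e where e: "e > 0" "ball x e \<subseteq> {y. h y \<noteq> 0}"
    using hx open_contains_ball[of "{y. h y \<noteq> 0}"] by auto
  from ae obtain N where N: "N \<in> null_sets lebesgue" "{y. h y \<noteq> 0} \<subseteq> N"
    by (auto simp: eventually_ae_filter)
  have "ball x e \<in> null_sets lebesgue"
  proof (rule null_sets_subset[OF N(1)])
    show "ball x e \<in> sets lebesgue" by simp
    show "ball x e \<subseteq> N" using N(2) e(2) by blast
  qed
  with ball_not_null[OF e(1), of x] show False by blast
qed



lemma apply_bcontfun_sum:
  "apply_bcontfun (\<Sum>i\<in>S. F i) x = (\<Sum>i\<in>S. apply_bcontfun (F i) x)"
  by (induction S rule: infinite_finite_induct) auto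

lemma basis_choice:
  fixes Q E :: "'v::real_vector set"
  assumes "finite Q" "finite E" "independent E" "card E = n" "card Q \<le> n"
  obtains D where "finite D" "card D = n" "independent D" "Q \<subseteq> span D"
proof -
  obtain B0 where B0: "B0 \<subseteq> Q" "independent B0" "Q \<subseteq> span B0"
    by (rule maximal_independent_subset)
  obtain C where C: "B0 \<subseteq> C" "C \<subseteq> Q \<union> E" "independent C" "Q \<union> E \<subseteq> span C"
    using maximal_independent_subset_extend[of B0 "Q \<union> E"] B0 by blast
  have fC: "finite C" using C assms by (meson finite_Un finite_subset)
  have "card E \<le> card C" using independent_span_bound[OF fC assms(3)] C by blast
  have fB0: "finite B0" using B0 assms finite_subset by blast
  have cB0: "card B0 \<le> n" using B0 assms card_mono order_trans by blast
  have "card (C - B0) = card C - card B0" using C fC card_Diff_subset fB0 by blast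
  then have "n - card B0 \<le> card (C - B0)" using \<open>card E \<le> card C\<close> assms by linarith
  then obtain X where X: "X \<subseteq> C - B0" "card X = n - card B0"
    using obtain_subset_with_card_n by metis
  have fX: "finite X" using X fC finite_subset by blast
  define D where "D = B0 \<union> X"
  have "card D = card B0 + card X" unfolding D_def
    using X fX fB0 by (subst card_Un_disjoint) auto
  then have "card D = n" using X cB0 by simp
  moreover have "finite D" using fX fB0 D_def by simp
  moreover have "independent D" using C X D_def independent_mono by (metis Diff_subset Un_subset_iff order_trans)
  moreover have "Q \<subseteq> span D" using B0 D_def by (metis span_mono sup_ge1 order_trans)
  ultimately show ?thesis using that by blast
qed

definition phi :: "'a::euclidean_space \<Rightarrow> real" where "phi x = 1 / (1 + norm x)"

lemma phi_cont: "continuous_on UNIV phi"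
  unfolding phi_def by (intro continuous_intros) (smt (verit) norm_ge_zero)

lemma phi_bounds: "0 < phi x" "phi x \<le> 1"
  unfolding phi_def by (auto simp: add_pos_nonneg)

lemma phi_pow_bcontfun: "(\<lambda>x::'a::euclidean_space. phi x ^ k) \<in> bcontfun"
proof (rule bcontfun_normI)
  show "continuous_on UNIV (\<lambda>x. phi x ^ k)" by (intro continuous_intros phi_cont)
  show "norm (phi x ^ k) \<le> 1" for x :: 'a using phi_bounds[of x] by (simp add: power_le_one abs_of_pos)
qed

definition Ef :: "nat \<Rightarrow> ('a::euclidean_space \<Rightarrow>\<^sub>C real)" where
  "Ef k = Bcontfun (\<lambda>x. phi x ^ k)"

lemma Ef_apply: "apply_bcontfun (Ef k) x = phi x ^ k"
  unfolding Ef_def by (metis Bcontfun_inverse phi_pow_bcontfun)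

lemma phi_surj:
  assumes "0 < z" "z \<le> (1::real)"
  shows "\<exists>x::'a::euclidean_space. phi x = z"
proof -
  obtain b :: 'a where b: "b \<in> Basis" using nonempty_Basis by blast
  have nb: "norm b = 1" using b by simp
  let ?t = "1 / z - 1"
  have t: "?t \<ge> 0" using assms by (simp add: field_simps)
  have "phi (?t *\<^sub>R b) = 1 / (1 + ?t)" unfolding phi_def using nb t by simp
  also have "\<dots> = z" using assms by simp
  finally show ?thesis by blast
qed

lemma Ef_poly_zero:
  assumes "\<And>x::'a::euclidean_space. (\<Sum>k<n. c k * phi x ^ k) = 0"
  shows "\<forall>k<n. c k = 0"
proof (cases n)
  case 0 then show ?thesis by simp
next
  case (Suc m)
  define c' where "c' k = (if k < n then c k else 0)" for k
  have "{0<..(1::real)} \<subseteq> {z. (\<Sum>i\<le>m. c' i * z^i) = 0}"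
  proof
    fix z :: real assume "z \<in> {0<..1}"
    then obtain x :: 'a where "phi x = z" using phi_surj by auto
    have "(\<Sum>i\<le>m. c' i * z^i) = (\<Sum>k<n. c k * phi x ^ k)"
      using Suc \<open>phi x = z\<close> by (simp add: c'_def lessThan_Suc_atMost)
    then show "z \<in> {z. (\<Sum>i\<le>m. c' i * z^i) = 0}" using assms by simp
  qed
  moreover have "infinite {0<..(1::real)}" by simp
  ultimately have "infinite {z. (\<Sum>i\<le>m. c' i * z^i) = 0}" using finite_subset by blast
  then have "\<forall>i\<le>m. c' i = 0" using polyfun_finite_roots by blast
  then show ?thesis using Suc c'_def by auto
qed

lemma Ef_inj: "inj (Ef :: nat \<Rightarrow> ('a::euclidean_space \<Rightarrow>\<^sub>C real))"
proof
  fix j k assume "(Ef j :: 'a \<Rightarrow>\<^sub>C real) = Ef k"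
  obtain x :: 'a where x: "phi x = 1/2" using phi_surj[of "1/2"] by auto
  have "phi x ^ j = phi x ^ k" using \<open>Ef j = Ef k\<close> by (metis Ef_apply)
  then have h: "(1/2::real) ^ j = (1/2) ^ k" using x by simp
  show "j = k"
  proof (rule ccontr)
    assume "j \<noteq> k"
    then have "j < k \<or> k < j" by arith
    have m: "\<And>a b. ((1/2::real) ^ a < (1/2) ^ b) = (b < a)"
      using power_strict_decreasing_iff[of "1/2::real"] by simp
    show False using \<open>j < k \<or> k < j\<close> h m by (metis less_irrefl)
  qed
qed

lemma Ef_indep: "independent ((Ef :: nat \<Rightarrow> ('a::euclidean_space \<Rightarrow>\<^sub>C real)) ` {..<n})"
proof
  assume "dependent ((Ef :: nat \<Rightarrow> ('a \<Rightarrow>\<^sub>C real)) ` {..<n})"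
  then obtain u where u: "\<exists>v \<in> Ef ` {..<n}. u v \<noteq> 0" "(\<Sum>v\<in>(Ef :: nat \<Rightarrow> ('a \<Rightarrow>\<^sub>C real)) ` {..<n}. u v *\<^sub>R v) = 0"
    using dependent_finite[of "(Ef :: nat \<Rightarrow> ('a \<Rightarrow>\<^sub>C real)) ` {..<n}"] by auto
  have s: "(\<Sum>k<n. u (Ef k) *\<^sub>R (Ef k :: 'a \<Rightarrow>\<^sub>C real)) = 0"
    using u(2) by (simp add: sum.reindex inj_on_subset[OF Ef_inj])
  have "\<And>x::'a. (\<Sum>k<n. u (Ef k) * phi x ^ k) = 0"
  proof -
    fix x :: 'a
    have "apply_bcontfun (\<Sum>k<n. u (Ef k) *\<^sub>R (Ef k :: 'a \<Rightarrow>\<^sub>C real)) x = 0" using s by simp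
    then show "(\<Sum>k<n. u (Ef k) * phi x ^ k) = 0" by (simp add: apply_bcontfun_sum Ef_apply)
  qed
  then have "\<forall>k<n. u (Ef k :: 'a \<Rightarrow>\<^sub>C real) = 0" by (rule Ef_poly_zero)
  with u(1) show False by auto
qed

lemma Ef_card: "card ((Ef :: nat \<Rightarrow> ('a::euclidean_space \<Rightarrow>\<^sub>C real)) ` {..<n}) = n"
  using card_image[OF inj_on_subset[OF Ef_inj subset_UNIV], of "{..<n}"] by simp


lemma bnd_int:
  fixes h F :: "'b \<Rightarrow> real"
  assumes "integrable M F" "h \<in> borel_measurable M" "\<And>x. \<bar>h x\<bar> \<le> F x"
  shows "integrable M h"
proof (rule Bochner_Integration.integrable_bound[OF assms(1,2)])
  show "AE x in M. norm (h x) \<le> norm (F x)"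
    using assms(3) by (auto intro!: AE_I2 order_trans[OF _ abs_ge_self])
qed

lemma loclip_cont:
  fixes g :: "'a::euclidean_space \<Rightarrow> real"
  assumes "locally_lipschitz g" shows "continuous_on UNIV g"
proof (rule continuous_at_imp_continuous_on, intro ballI)
  fix x :: 'a
  obtain e L where "e > 0" "L-lipschitz_on (ball x e) g"
    using assms unfolding locally_lipschitz_def by blast
  then have "continuous_on (ball x e) g" by (metis lipschitz_on_continuous_on)
  then show "isCont g x" using \<open>e > 0\<close> continuous_on_eq_continuous_at[OF open_ball, of x e g] by simp
qed



lemma abs_le_sq1: "\<bar>a::real\<bar> \<le> a * a + 1"
proof (cases "\<bar>a\<bar> \<le> 1")
  case True then show ?thesis using zero_le_square[of a] by linarith
next
  case False then have "\<bar>a\<bar> * 1 \<le> \<bar>a\<bar> * \<bar>a\<bar>" by (intro mult_left_mono) auto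
  then show ?thesis by (simp add: abs_mult_self_eq)
qed


theorem mainTheorem3:
  fixes f :: "nat \<Rightarrow> 'a::euclidean_space \<Rightarrow> real"
    and w :: "nat \<Rightarrow> real" and n :: nat and C :: real
  assumes smooth: "\<And>i. i < n \<Longrightarrow> smooth_fun (f i)"
    and dens: "\<And>i. i < n \<Longrightarrow> prob_density (\<lambda>x. exp (- f i x))"
    and wpos: "\<And>i. i < n \<Longrightarrow> w i > 0"
    and wsum: "(\<Sum>i<n. w i) = 1"
    and Cpos: "C > 0"
    and PI: "\<And>i. i < n \<Longrightarrow> poincare (\<lambda>x. exp (- f i x)) C"
  shows "eigval (n + 1) (\<lambda>x. \<Sum>i<n. w i * exp (- f i x)) \<ge> ereal (1 / C)"
proof -
  define P where "P i x = exp (- f i x)" for i x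
  define p where "p x = (\<Sum>i<n. w i * P i x)" for x
  have n0: "n > 0" using wsum by (cases n) auto
  have contP: "continuous_on UNIV (P i)" if "i < n" for i
  proof -
    have "\<forall>x. f i differentiable (at x)"
      using smooth[OF that] unfolding smooth_fun_def by (metis empty_subsetI list.set(1) pderivs.simps(1))
    then have "continuous_on UNIV (f i)"
      by (simp add: differentiable_at_imp_differentiable_on differentiable_imp_continuous_on)
    then show ?thesis unfolding P_def by (intro continuous_intros)
  qed
  have Ppos: "P i x > 0" for i x unfolding P_def by simp
  have intP: "integrable lebesgue (P i)" if "i < n" for i
    using dens[OF that] unfolding prob_density_def P_def by blast
  have ppos: "p x > 0" for x
    unfolding p_def using n0 wpos Ppos by (intro sum_pos) auto
  have contp: "continuous_on UNIV p" unfolding p_def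
    by (intro continuous_intros) (use contP in auto)
  have intp: "integrable lebesgue p" unfolding p_def
    by (intro Bochner_Integration.integrable_sum Bochner_Integration.integrable_mult_right) (use intP in auto)
  have wPle: "w i * P i x \<le> p x" if "i < n" for i x
    unfolding p_def using that wpos Ppos
    by (intro member_le_sum) (auto intro: less_imp_le)
  have pmeas: "p \<in> borel_measurable lebesgue" by (rule cont_meas[OF contp])
  have bint: "integrable lebesgue (\<lambda>x. h x * p x)"
    if "continuous_on UNIV h" "\<And>x. \<bar>h x\<bar> \<le> B" for h B
  proof (rule bnd_int[of _ "\<lambda>x. B * p x"])
    show "integrable lebesgue (\<lambda>x. B * p x)" using intp by simp
    show "(\<lambda>x. h x * p x) \<in> borel_measurable lebesgue"
      using cont_meas[OF that(1)] pmeas by simp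
    show "\<bar>h x * p x\<bar> \<le> B * p x" for x
      using that(2)[of x] ppos[of x] by (simp add: abs_mult mult_right_mono less_imp_le)
  qed

  define q where "q i = Bcontfun (\<lambda>x. w i * P i x / p x)" for i
  have qbc: "(\<lambda>x. w i * P i x / p x) \<in> bcontfun" if "i < n" for i
  proof (rule bcontfun_normI)
    show "continuous_on UNIV (\<lambda>x. w i * P i x / p x)"
      using contP[OF that] contp ppos by (intro continuous_intros) (auto simp: less_imp_neq[symmetric])
    show "norm (w i * P i x / p x) \<le> 1" for x
      using wPle[OF that, of x] wpos[OF that] Ppos[of i x] ppos[of x] by (simp add: abs_of_pos)
  qed
  have qapp: "apply_bcontfun (q i) x = w i * P i x / p x" if "i < n" for i x
    unfolding q_def using qbc[OF that] by (simp add: Bcontfun_inverse)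
  define Q where "Q = q ` {..<n}"
  define E where "E = (Ef :: nat \<Rightarrow> ('a \<Rightarrow>\<^sub>C real)) ` {..<n}"
  obtain D where D: "finite D" "card D = n" "independent D" "Q \<subseteq> span D"
  proof -
    have fQ: "finite Q" unfolding Q_def by simp
    have fE: "finite E" unfolding E_def by simp
    have iE: "independent E" unfolding E_def by (rule Ef_indep)
    have cE: "card E = n" unfolding E_def by (rule Ef_card)
    have cQ: "card Q \<le> n" unfolding Q_def using card_image_le[of "{..<n}" q] by simp
    show ?thesis using basis_choice[OF fQ fE iE cE cQ] that by blast
  qed
  obtain e where e: "bij_betw e {..<n} D"
    using ex_bij_betw_nat_finite[OF D(1)] unfolding D(2) atLeast0LessThan by blast
  define s where "s j = apply_bcontfun (e j)" for j
  have contS: "continuous_on UNIV (apply_bcontfun v)" for v :: "'a \<Rightarrow>\<^sub>C real" by simp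

  have indep: "l2_indep p n s"
    unfolding l2_indep_def
  proof (intro conjI allI impI)
    fix j assume "j < n"
    show "s j \<in> L2_p p" unfolding L2_p_def s_def
    proof (intro CollectI conjI)
      show "apply_bcontfun (e j) \<in> borel_measurable lebesgue" by (rule cont_meas[OF contS])
      show "integrable lebesgue (\<lambda>x. (apply_bcontfun (e j) x)\<^sup>2 * p x)"
      proof (rule bint[where B="(norm (e j))\<^sup>2"])
        show "continuous_on UNIV (\<lambda>x. (apply_bcontfun (e j) x)\<^sup>2)"
          by (intro continuous_on_power continuous_on_apply_bcontfun)
        show "\<bar>(apply_bcontfun (e j) x)\<^sup>2\<bar> \<le> (norm (e j))\<^sup>2" for x
        proof -
          have "\<bar>apply_bcontfun (e j) x\<bar> \<le> norm (e j)" using norm_bounded[of "e j" x] by simp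
          then have "\<bar>apply_bcontfun (e j) x\<bar>^2 \<le> (norm (e j))^2" by (rule power_mono) simp
          then show ?thesis by simp
        qed
      qed
    qed
  next
    fix c :: "nat \<Rightarrow> real" and j
    assume nz: "normsq_p p (\<lambda>x. \<Sum>j<n. c j * s j x) = 0" and jn: "j < n"
    define V where "V = (\<Sum>j<n. c j *\<^sub>R e j)"
    have Vapp: "apply_bcontfun V x = (\<Sum>j<n. c j * s j x)" for x
      unfolding V_def s_def by (simp add: apply_bcontfun_sum)
    define h where "h x = apply_bcontfun V x * apply_bcontfun V x * p x" for x
    have hint: "integrable lebesgue h" unfolding h_def
    proof (rule bint[where B="(norm V)\<^sup>2"])
      show "continuous_on UNIV (\<lambda>x. apply_bcontfun V x * apply_bcontfun V x)"
        by (intro continuous_on_mult continuous_on_apply_bcontfun)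
      show "\<bar>apply_bcontfun V x * apply_bcontfun V x\<bar> \<le> (norm V)\<^sup>2" for x
      proof -
        have "\<bar>apply_bcontfun V x\<bar> \<le> norm V" using norm_bounded[of V x] by simp
        then have "\<bar>apply_bcontfun V x\<bar>^2 \<le> (norm V)^2" by (rule power_mono) simp
        then show ?thesis by (simp add: abs_mult power2_eq_square)
      qed
    qed
    have "integral\<^sup>L lebesgue h = 0" using nz unfolding normsq_p_def inner_p_def h_def Vapp by simp
    moreover have h0: "0 \<le> h x" for x
      unfolding h_def using ppos[of x] by (simp add: less_imp_le)
    ultimately have "AE x in lebesgue. h x = 0"
      using integral_nonneg_eq_0_iff_AE[OF hint] by simp
    then have "h x = 0" for x
      by (rule AE_cont_zero[rotated]) (unfold h_def, intro continuous_intros contp contS)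
    then have "apply_bcontfun V x = 0" for x using ppos[of x] unfolding h_def by (metis less_irrefl mult_eq_0_iff)
    then have V0: "V = 0" by (intro bcontfun_eqI) simp
    show "c j = 0"
    proof (rule ccontr)
      assume cj: "c j \<noteq> 0"
      define u where "u v = c (the_inv_into {..<n} e v)" for v
      have inv: "the_inv_into {..<n} e (e k) = k" if "k < n" for k
        using e that by (simp add: bij_betw_def the_inv_into_f_f)
      have "(\<Sum>v\<in>D. u v *\<^sub>R v) = (\<Sum>k<n. u (e k) *\<^sub>R e k)"
        using sum.reindex_bij_betw[OF e, of "\<lambda>v. u v *\<^sub>R v"] by simp
      also have "\<dots> = V" unfolding V_def u_def using inv by simp
      finally have "(\<Sum>v\<in>D. u v *\<^sub>R v) = 0" using V0 by simp
      moreover have "e j \<in> D" using e jn by (auto simp: bij_betw_def)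
      moreover have "u (e j) \<noteq> 0" unfolding u_def using inv[OF jn] cj by simp
      ultimately have "dependent D" using dependent_finite[OF D(1)] by blast
      with D(3) show False by simp
    qed
  qed

  have PIP: "poincare (P i) C" if "i < n" for i
    using PI[OF that] unfolding P_def[abs_def] .
  have key: "ereal (1 / C) \<le> ereal (dirichlet p g / normsq_p p g)"
    if adm: "admissible p g" and gnz: "normsq_p p g \<noteq> 0"
      and orth: "\<forall>j<n. inner_p p g (s j) = 0" for g
  proof -
    define A where "A x = ((g x)\<^sup>2 + (norm (grad g x))\<^sup>2) * p x" for x
    have lip: "locally_lipschitz g" and Aint: "integrable lebesgue A"
      using adm unfolding admissible_def A_def by auto
    have gc: "continuous_on UNIV g" by (rule loclip_cont[OF lip])
    have gmeas: "g \<in> borel_measurable lebesgue" by (rule cont_meas[OF gc])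
    have Ameas: "A \<in> borel_measurable lebesgue" using Aint by (rule borel_measurable_integrable)
    have Anonneg: "0 \<le> A x" for x unfolding A_def using ppos[of x] by (simp add: less_imp_le)
    have Age: "g x * g x * p x \<le> A x" for x
      unfolding A_def using ppos[of x] by (simp add: distrib_right less_imp_le power2_eq_square)
    have ggpmeas: "(\<lambda>x. g x * g x * p x) \<in> borel_measurable lebesgue"
      by (intro borel_measurable_times gmeas pmeas)
    have g2int: "integrable lebesgue (\<lambda>x. g x * g x * p x)"
    proof (rule bnd_int[OF Aint ggpmeas])
      show "\<bar>g x * g x * p x\<bar> \<le> A x" for x using Age[of x] ppos[of x] by (simp add: less_imp_le)
    qed
    have gpint: "integrable lebesgue (\<lambda>x. g x * p x)"
    proof (rule bnd_int[of _ "\<lambda>x. g x * g x * p x + p x"])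
      show "integrable lebesgue (\<lambda>x. g x * g x * p x + p x)"
        using g2int intp by (rule Bochner_Integration.integrable_add)
      show "(\<lambda>x. g x * p x) \<in> borel_measurable lebesgue" by (intro borel_measurable_times gmeas pmeas)
      show "\<bar>g x * p x\<bar> \<le> g x * g x * p x + p x" for x
      proof -
        have "\<bar>g x * p x\<bar> = \<bar>g x\<bar> * p x" using ppos[of x] by (simp add: abs_mult)
        also have "\<dots> \<le> (g x * g x + 1) * p x"
          using abs_le_sq1[of "g x"] ppos[of x] by (intro mult_right_mono) auto
        finally show ?thesis by (simp add: algebra_simps)
      qed
    qed
    have gvint: "integrable lebesgue (\<lambda>x. g x * apply_bcontfun v x * p x)" for v
    proof (rule bnd_int[of _ "\<lambda>x. norm v * \<bar>g x * p x\<bar>"])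
      show "integrable lebesgue (\<lambda>x. norm v * \<bar>g x * p x\<bar>)"
        using gpint by (intro Bochner_Integration.integrable_mult_right integrable_abs)
      show "(\<lambda>x. g x * apply_bcontfun v x * p x) \<in> borel_measurable lebesgue"
        by (intro borel_measurable_times gmeas pmeas cont_meas[OF contS])
      show "\<bar>g x * apply_bcontfun v x * p x\<bar> \<le> norm v * \<bar>g x * p x\<bar>" for x
      proof -
        have "\<bar>g x * apply_bcontfun v x * p x\<bar> = \<bar>apply_bcontfun v x\<bar> * \<bar>g x * p x\<bar>"
          by (simp add: abs_mult)
        also have "\<dots> \<le> norm v * \<bar>g x * p x\<bar>"
          using norm_bounded[of v x] by (intro mult_right_mono) auto
        finally show ?thesis .
      qed
    qed
    define L where "L v = (\<integral>x. g x * apply_bcontfun v x * p x \<partial>lebesgue)" for v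
    have sub: "subspace {v. L v = 0}"
      unfolding subspace_def
    proof (intro conjI ballI allI)
      show "0 \<in> {v. L v = 0}" unfolding L_def by simp
      fix v1 v2 assume v1: "v1 \<in> {v. L v = 0}" and v2: "v2 \<in> {v. L v = 0}"
      have "L (v1 + v2) = (\<integral>x. g x * apply_bcontfun v1 x * p x + g x * apply_bcontfun v2 x * p x \<partial>lebesgue)"
        unfolding L_def by (rule Bochner_Integration.integral_cong) (simp_all add: algebra_simps)
      also have "\<dots> = L v1 + L v2" unfolding L_def
        by (rule Bochner_Integration.integral_add[OF gvint gvint])
      finally have "L (v1 + v2) = L v1 + L v2" .
      show "v1 + v2 \<in> {v. L v = 0}" using v1 v2 \<open>L (v1 + v2) = L v1 + L v2\<close> by simp
    next
      fix c :: real and v assume v: "v \<in> {v. L v = 0}"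
      have "L (c *\<^sub>R v) = (\<integral>x. c * (g x * apply_bcontfun v x * p x) \<partial>lebesgue)"
        unfolding L_def by (rule Bochner_Integration.integral_cong) (simp_all add: algebra_simps)
      also have "\<dots> = c * L v" unfolding L_def by (rule integral_mult_right_zero)
      finally have "L (c *\<^sub>R v) = c * L v" .
      show "c *\<^sub>R v \<in> {v. L v = 0}" using v \<open>L (c *\<^sub>R v) = c * L v\<close> by simp
    qed
    have "D \<subseteq> {v. L v = 0}"
    proof
      fix v assume "v \<in> D"
      then obtain j where j: "j < n" "v = e j" using e by (auto simp: bij_betw_def)
      then have "L v = inner_p p g (s j)" unfolding L_def inner_p_def s_def by simp
      then show "v \<in> {v. L v = 0}" using orth j by simp
    qed
    then have "span D \<subseteq> {v. L v = 0}" using sub by (rule span_minimal)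
    then have Lq: "L (q i) = 0" if "i < n" for i using D(4) that unfolding Q_def by auto
    have mean0: "(\<integral>x. g x * P i x \<partial>lebesgue) = 0" if i: "i < n" for i
    proof -
      have "L (q i) = (\<integral>x. w i * (g x * P i x) \<partial>lebesgue)" unfolding L_def
        using qapp[OF i] ppos by (intro Bochner_Integration.integral_cong) (auto simp: field_simps less_imp_neq[symmetric])
      also have "\<dots> = w i * (\<integral>x. g x * P i x \<partial>lebesgue)" by (rule integral_mult_right_zero)
      finally show ?thesis using Lq[OF i] wpos[OF i] by simp
    qed
    define N where "N i = (\<integral>x. g x * g x * P i x \<partial>lebesgue)" for i
    define Dr where "Dr i = (\<integral>x. (norm (grad g x))\<^sup>2 * P i x \<partial>lebesgue)" for i
    have each: "Dr i \<ge> (1 / C) * N i \<and> integrable lebesgue (\<lambda>x. g x * g x * P i x)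
        \<and> integrable lebesgue (\<lambda>x. (norm (grad g x))\<^sup>2 * P i x)" if i: "i < n" for i
    proof -
      have wi: "w i > 0" using wpos[OF i] .
      have rmeas: "(\<lambda>x. P i x / p x) \<in> borel_measurable lebesgue"
        using contP[OF i] contp ppos by (intro cont_meas continuous_intros) (auto simp: less_imp_neq[symmetric])
      have rle: "P i x / p x \<le> 1 / w i" for x
        using wPle[OF i, of x] wi ppos[of x] by (simp add: field_simps)
      have r0: "0 \<le> P i x / p x" for x using Ppos[of i x] ppos[of x] by (simp add: less_imp_le)
      have GPeq: "((g x)\<^sup>2 + (norm (grad g x))\<^sup>2) * P i x = A x * (P i x / p x)" for x
        unfolding A_def using ppos[of x] by (simp add: field_simps less_imp_neq[symmetric])
      have GPint: "integrable lebesgue (\<lambda>x. ((g x)\<^sup>2 + (norm (grad g x))\<^sup>2) * P i x)"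
        unfolding GPeq
      proof (rule bnd_int[of _ "\<lambda>x. (1 / w i) * A x"])
        show "integrable lebesgue (\<lambda>x. (1 / w i) * A x)" using Aint by simp
        show "(\<lambda>x. A x * (P i x / p x)) \<in> borel_measurable lebesgue"
          by (intro borel_measurable_times Ameas rmeas)
        show "\<bar>A x * (P i x / p x)\<bar> \<le> (1 / w i) * A x" for x
        proof -
          have "\<bar>A x * (P i x / p x)\<bar> = A x * (P i x / p x)"
            by (rule abs_of_nonneg[OF mult_nonneg_nonneg[OF Anonneg r0]])
          also have "\<dots> \<le> A x * (1 / w i)" by (rule mult_left_mono[OF rle Anonneg])
          finally show ?thesis by (simp add: mult.commute)
        qed
      qed
      have admi: "admissible (P i) g" unfolding admissible_def using lip GPint by simp
      have PIi: "dirichlet (P i) g \<ge> (1 / C) * var_p (P i) g"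
        using PIP[OF i] admi unfolding poincare_def by blast
      have var: "var_p (P i) g = N i"
        unfolding var_p_def normsq_p_def inner_p_def N_def using mean0[OF i] by simp
      have Pmeas: "P i \<in> borel_measurable lebesgue" by (rule cont_meas[OF contP[OF i]])
      have g2P: "integrable lebesgue (\<lambda>x. g x * g x * P i x)"
      proof (rule bnd_int[OF GPint])
        show "(\<lambda>x. g x * g x * P i x) \<in> borel_measurable lebesgue"
          by (intro borel_measurable_times gmeas Pmeas)
        show "\<bar>g x * g x * P i x\<bar> \<le> ((g x)\<^sup>2 + (norm (grad g x))\<^sup>2) * P i x" for x
          using Ppos[of i x] by (simp add: distrib_right less_imp_le power2_eq_square)
      qed
      have NPeq: "(\<lambda>x. (norm (grad g x))\<^sup>2 * P i x) =
          (\<lambda>x. ((g x)\<^sup>2 + (norm (grad g x))\<^sup>2) * P i x - g x * g x * P i x)"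
        by (rule ext) (simp add: algebra_simps power2_eq_square)
      have NP: "integrable lebesgue (\<lambda>x. (norm (grad g x))\<^sup>2 * P i x)"
        unfolding NPeq using GPint g2P by (rule Bochner_Integration.integrable_diff)
      show ?thesis using PIi var g2P NP unfolding dirichlet_def Dr_def by simp
    qed
    have dir: "dirichlet p g = (\<Sum>i<n. w i * Dr i)"
    proof -
      have "dirichlet p g = (\<integral>x. (\<Sum>i<n. w i * ((norm (grad g x))\<^sup>2 * P i x)) \<partial>lebesgue)"
        unfolding dirichlet_def p_def by (simp add: sum_distrib_left algebra_simps)
      also have "\<dots> = (\<Sum>i<n. (\<integral>x. w i * ((norm (grad g x))\<^sup>2 * P i x) \<partial>lebesgue))"
        by (rule Bochner_Integration.integral_sum) (use each in auto)
      also have "\<dots> = (\<Sum>i<n. w i * Dr i)" unfolding Dr_def by (simp add: integral_mult_right_zero)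
      finally show ?thesis .
    qed
    have nsq: "normsq_p p g = (\<Sum>i<n. w i * N i)"
    proof -
      have "normsq_p p g = (\<integral>x. (\<Sum>i<n. w i * (g x * g x * P i x)) \<partial>lebesgue)"
        unfolding normsq_p_def inner_p_def p_def by (simp add: sum_distrib_left algebra_simps)
      also have "\<dots> = (\<Sum>i<n. (\<integral>x. w i * (g x * g x * P i x) \<partial>lebesgue))"
        by (rule Bochner_Integration.integral_sum) (use each in auto)
      also have "\<dots> = (\<Sum>i<n. w i * N i)" unfolding N_def by (simp add: integral_mult_right_zero)
      finally show ?thesis .
    qed
    have "(1 / C) * normsq_p p g = (\<Sum>i<n. w i * ((1 / C) * N i))"
      unfolding nsq by (simp add: sum_distrib_left algebra_simps)
    also have "\<dots> \<le> (\<Sum>i<n. w i * Dr i)"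
      using each wpos by (intro sum_mono mult_left_mono) (auto simp: less_imp_le)
    finally have ineq: "(1 / C) * normsq_p p g \<le> dirichlet p g" unfolding dir .
    have "0 \<le> normsq_p p g" unfolding normsq_p_def inner_p_def
      using ppos by (intro Bochner_Integration.integral_nonneg) (simp add: less_imp_le)
    then have npos: "0 < normsq_p p g" using gnz by simp
    have "1 / C \<le> dirichlet p g / normsq_p p g"
      using ineq npos by (simp add: pos_le_divide_eq)
    then show ?thesis by simp
  qed
  have "ereal (1 / C) \<le> (INF g \<in> {g. admissible p g \<and> normsq_p p g \<noteq> 0 \<and> (\<forall>j<n. inner_p p g (s j) = 0)}.
        ereal (dirichlet p g / normsq_p p g))"
    by (rule INF_greatest) (use key in blast)
  also have "\<dots> \<le> eigval (n + 1) p"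
    unfolding eigval_def by (rule SUP_upper2[of s]) (use indep in simp_all)
  finally show ?thesis unfolding p_def P_def .
qed

end
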